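(* Let $R$ and $Q$ be finite sequences of formulas and $I,J$ models. If $I\le_{\emptyset R\cdot Q}J$, then $I\le_{\emptyset Q}J$.
   Context: Propositional models are truth assignments over a finite set of variables; a formula used where a set of models is expected stands for its set of models. A doxastic state is a sequence $C=[C(0),\ldots,C(k)]$ of nonempty, pairwise disjoint sets of models covering all models; $I\le_C J$ iff $I\in C(i)$, $J\in C(j)$ with $i\le j$. The flat doxastic state $\emptyset$ is $[\text{all models}]$. Lexicographic revision: $C\,\mathrm{lex}(A)=[C(0)\cap A,\ldots,C(k)\cap A,C(0)\setminus A,\ldots,C(k)\setminus A]$, empty sets discarded. For a sequence of formulas $T=[T_1,\ldots,T_n]$, $\emptyset T$ denotes $\emptyset$ revised lexicographically by $T_1$, then $T_2$, ..., then $T_n$. $R\cdot Q$ is concatenation. *)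

theory Defs
  imports Main
begin

type_synonym 'v model = "'v \<Rightarrow> bool"

datatype 'v form =
    FTrue
  | FFalse
  | Var 'v
  | Neg "'v form"
  | Conj "'v form" "'v form"
  | Disj "'v form" "'v form"
  | Impl "'v form" "'v form"

primrec sat :: "'v model \<Rightarrow> 'v form \<Rightarrow> bool" where
  "sat I FTrue = True"
| "sat I FFalse = False"
| "sat I (Var v) = I v"
| "sat I (Neg F) = (\<not> sat I F)"
| "sat I (Conj F G) = (sat I F \<and> sat I G)"
| "sat I (Disj F G) = (sat I F \<or> sat I G)"
| "sat I (Impl F G) = (sat I F \<longrightarrow> sat I G)"

definition models :: "'v form \<Rightarrow> 'v model set" where
  "models F = {I. sat I F}"

type_synonym 'v dstate = "'v model set list"

definition doxastic_state :: "'v dstate \<Rightarrow> bool" where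
  "doxastic_state C \<longleftrightarrow>
     (\<forall>i < length C. C ! i \<noteq> {}) \<and>
     (\<forall>i < length C. \<forall>j < length C. i \<noteq> j \<longrightarrow> C ! i \<inter> C ! j = {}) \<and>
     (\<Union> (set C) = UNIV)"

definition le_state :: "'v dstate \<Rightarrow> 'v model \<Rightarrow> 'v model \<Rightarrow> bool" where
  "le_state C I J \<longleftrightarrow>
     (\<exists>i < length C. \<exists>j < length C. I \<in> C ! i \<and> J \<in> C ! j \<and> i \<le> j)"

definition flat :: "'v dstate" where
  "flat = [UNIV]"

definition lex :: "'v dstate \<Rightarrow> 'v form \<Rightarrow> 'v dstate" where
  "lex C A = filter (\<lambda>S. S \<noteq> {})
     (map (\<lambda>S. S \<inter> models A) C @ map (\<lambda>S. S - models A) C)"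

text \<open>\<emptyset>T: the flat state revised lexicographically by T_1, then T_2, ..., T_n.\<close>
definition revise_seq :: "'v form list \<Rightarrow> 'v dstate" where
  "revise_seq T = foldl lex flat T"

end

theory Submission
  imports Defs
begin

lemma le_nil[simp]: "\<not> le_state [] I J"
  by (simp add: le_state_def)

lemma le_cons[simp]: "le_state (S # L) I J \<longleftrightarrow> (I \<in> S \<and> J \<in> \<Union> (set (S # L))) \<or> le_state L I J"
proof
  assume "le_state (S # L) I J"
  then obtain i j where h: "i < Suc (length L)" "j < Suc (length L)" "I \<in> (S#L) ! i" "J \<in> (S#L) ! j" "i \<le> j"
    by (auto simp: le_state_def)
  show "(I \<in> S \<and> J \<in> \<Union> (set (S # L))) \<or> le_state L I J"
  proof (cases i)
    case 0
    then show ?thesis using h nth_mem[of j "S#L"] by auto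
  next
    case (Suc i')
    then obtain j' where "j = Suc j'" using h by (cases j) auto
    then have "le_state L I J" using h Suc unfolding le_state_def by (intro exI[of _ i'] conjI exI[of _ j']) auto
    then show ?thesis by blast
  qed
next
  assume "(I \<in> S \<and> J \<in> \<Union> (set (S # L))) \<or> le_state L I J"
  then show "le_state (S # L) I J"
  proof
    assume "I \<in> S \<and> J \<in> \<Union> (set (S # L))"
    then obtain j where "j < length (S#L)" "J \<in> (S#L) ! j" by (metis UnionE in_set_conv_nth)
    then show ?thesis using \<open>I \<in> S \<and> J \<in> \<Union> (set (S # L))\<close> unfolding le_state_def
      by (intro exI[of _ 0]) auto
  next
    assume "le_state L I J"
    then obtain i j where "i < length L" "j < length L" "I \<in> L ! i" "J \<in> L ! j" "i \<le> j"
      by (auto simp: le_state_def)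
    then show ?thesis unfolding le_state_def
      by (intro exI[of _ "Suc i"] conjI exI[of _ "Suc j"]) auto
  qed
qed

lemma le_filter: "le_state (filter (\<lambda>S. S \<noteq> {}) L) I J \<longleftrightarrow> le_state L I J"
proof (induction L)
  case (Cons S L)
  have "\<Union> (set (filter (\<lambda>S. S \<noteq> {}) L)) = \<Union> (set L)" by auto
  then show ?case using Cons by auto
qed simp

lemma le_app: "le_state (L1 @ L2) I J \<longleftrightarrow> le_state L1 I J \<or> le_state L2 I J \<or> (I \<in> \<Union> (set L1) \<and> J \<in> \<Union> (set L2))"
  by (induction L1) auto

lemma le_map_int: "le_state (map (\<lambda>S. S \<inter> X) C) I J \<longleftrightarrow> I \<in> X \<and> J \<in> X \<and> le_state C I J"
  by (induction C) auto

lemma le_map_diff: "le_state (map (\<lambda>S. S - X) C) I J \<longleftrightarrow> I \<notin> X \<and> J \<notin> X \<and> le_state C I J"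
  by (induction C) auto

lemma cover_lex: "\<Union> (set (lex C A)) = \<Union> (set C)"
  unfolding lex_def by auto

lemma le_lex:
  assumes "\<Union> (set C) = UNIV"
  shows "le_state (lex C A) I J \<longleftrightarrow> (I \<in> models A \<and> J \<notin> models A) \<or>
     ((I \<in> models A \<longleftrightarrow> J \<in> models A) \<and> le_state C I J)"
  unfolding lex_def le_filter le_app le_map_int le_map_diff using assms by auto

lemma cover_foldl: "\<Union> (set C) = UNIV \<Longrightarrow> \<Union> (set (foldl lex C Q)) = UNIV"
  by (induction Q arbitrary: C) (auto simp: cover_lex)

lemma main_gen:
  assumes "\<Union> (set C) = UNIV" "le_state (foldl lex C Q) I J"
  shows "le_state (foldl lex flat Q) I J"
  using assms(2)
proof (induction Q rule: rev_induct)
  case Nil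
  then show ?case by (simp add: flat_def)
next
  case (snoc A Q)
  have c1: "\<Union> (set (foldl lex C Q)) = UNIV" using cover_foldl assms(1) by blast
  have c2: "\<Union> (set (foldl lex flat Q)) = UNIV" using cover_foldl[of flat] by (simp add: flat_def)
  show ?case using snoc le_lex[OF c1] le_lex[OF c2] by auto
qed

theorem mainTheorem19:
  fixes R Q :: "('v::finite) form list" and I J :: "'v model"
  assumes "le_state (revise_seq (R @ Q)) I J"
  shows "le_state (revise_seq Q) I J"
proof -
  have "\<Union> (set (foldl lex flat R)) = UNIV" using cover_foldl[of flat] by (simp add: flat_def)
  then show ?thesis using assms main_gen unfolding revise_seq_def by auto
qed

end
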